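(* Let $x_1,\ldots,x_n$ be independent random variables with common mean $\mu_x$ and $|x_i-\mu_x|\le C_x$ for a constant $C_x$. Let $s_n=\sum_{i=1}^n x_i$ and let $\hat s_n$ be computed by recursive summation: $\hat s_1=x_1$, $\hat s_k=(\hat s_{k-1}+x_k)(1+\delta_k)$ for $2\le k\le n$, with $E_n=\hat s_n-s_n$. Assume that $\delta_2,\ldots,\delta_n$ are independent random variables of mean zero with $|\delta_k|\le u$, where $0<u<1$, and that $(\delta_2,\ldots,\delta_n)$ is independent of $(x_1,\ldots,x_n)$. Then for any $\delta\in(0,1)$, with probability at least $1-\delta$, \[ |E_n|\le \bigl(1+\tilde\gamma_n(\delta/3)\bigr)\bigl(\lambda|\mu_x|n^{3/2}+\lambda^2C_x n\bigr)u, \] where $\lambda=\lambda(\delta/3)=\sqrt{2\log(6/\delta)}$.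
   Context: For $\delta\in(0,1)$, $\lambda(\delta)=\sqrt{2\log(2/\delta)}$ and $\tilde\gamma_n(\delta)=\exp\!\left(\frac{\lambda(\delta)\sqrt{n}\,u+nu^2}{1-u}\right)-1$. The recurrence models recursive summation in floating-point arithmetic with unit roundoff $u$; $\delta_k$ is the relative rounding error at step $k$. *)

theory Defs
  imports "HOL-Probability.Probability"
begin

definition lam :: "real \<Rightarrow> real" where
  "lam \<delta> = sqrt (2 * ln (2 / \<delta>))"

definition gamma_tilde :: "real \<Rightarrow> nat \<Rightarrow> real \<Rightarrow> real" where
  "gamma_tilde u n \<delta> =
     exp ((lam \<delta> * sqrt (real n) * u + real n * u^2) / (1 - u)) - 1"

text \<open>Recursive summation (indices start at 1):
  rsum xs ds 1 = xs 1,  rsum xs ds k = (rsum xs ds (k-1) + xs k) * (1 + ds k) for k >= 2.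
  The value at 0 is an unused convention (empty sum).\<close>
fun rsum :: "(nat \<Rightarrow> real) \<Rightarrow> (nat \<Rightarrow> real) \<Rightarrow> nat \<Rightarrow> real" where
  "rsum xs ds 0 = 0"
| "rsum xs ds (Suc 0) = xs 1"
| "rsum xs ds (Suc (Suc k)) =
     (rsum xs ds (Suc k) + xs (Suc (Suc k))) * (1 + ds (Suc (Suc k)))"

end

theory Submission
  imports Defs
begin



lemma (in prob_space) cond1:
  assumes ind: "indep_var S A T B"
    and h: "h \<in> borel_measurable (S \<Otimes>\<^sub>M T)"
  shows "(\<integral>\<^sup>+\<omega>. h (A \<omega>, B \<omega>) \<partial>M) = (\<integral>\<^sup>+a. (\<integral>\<^sup>+\<omega>. h (a, B \<omega>) \<partial>M) \<partial>distr M S A)"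
proof -
  have rv: "random_variable S A" "random_variable T B"
    using ind by (auto dest: indep_var_rv1 indep_var_rv2)
  have eq: "distr M S A \<Otimes>\<^sub>M distr M T B = distr M (S \<Otimes>\<^sub>M T) (\<lambda>x. (A x, B x))"
    using ind indep_var_distribution_eq by blast
  interpret X: prob_space "distr M S A" by (rule prob_space_distr) fact
  interpret Y: prob_space "distr M T B" by (rule prob_space_distr) fact
  interpret XY: pair_prob_space "distr M S A" "distr M T B" ..
  have hm: "h \<in> borel_measurable (distr M S A \<Otimes>\<^sub>M distr M T B)"
    using h by (simp add: eq)
  have "(\<integral>\<^sup>+\<omega>. h (A \<omega>, B \<omega>) \<partial>M) = integral\<^sup>N (distr M (S \<Otimes>\<^sub>M T) (\<lambda>x. (A x, B x))) h"
    using rv h by (subst nn_integral_distr) (auto intro: measurable_Pair)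
  also have "\<dots> = integral\<^sup>N (distr M S A \<Otimes>\<^sub>M distr M T B) h" by (simp add: eq)
  also have "\<dots> = (\<integral>\<^sup>+a. \<integral>\<^sup>+b. h (a, b) \<partial>distr M T B \<partial>distr M S A)"
    using Y.nn_integral_fst[OF hm] by simp
  also have "\<dots> = (\<integral>\<^sup>+a. (\<integral>\<^sup>+\<omega>. h (a, B \<omega>) \<partial>M) \<partial>distr M S A)"
  proof (rule nn_integral_cong)
    fix a assume "a \<in> space (distr M S A)"
    then have "a \<in> space S" by simp
    then show "(\<integral>\<^sup>+b. h (a, b) \<partial>distr M T B) = (\<integral>\<^sup>+\<omega>. h (a, B \<omega>) \<partial>M)"
      using rv h by (subst nn_integral_distr) (auto intro: measurable_Pair1' )
  qed
  finally show ?thesis .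
qed

lemma (in prob_space) cond2:
  assumes ind: "indep_var S A T B"
    and h: "h \<in> borel_measurable (S \<Otimes>\<^sub>M T)"
  shows "(\<integral>\<^sup>+\<omega>. h (A \<omega>, B \<omega>) \<partial>M) = (\<integral>\<^sup>+b. (\<integral>\<^sup>+\<omega>. h (A \<omega>, b) \<partial>M) \<partial>distr M T B)"
proof -
  have rv: "random_variable S A" "random_variable T B"
    using ind by (auto dest: indep_var_rv1 indep_var_rv2)
  have eq: "distr M S A \<Otimes>\<^sub>M distr M T B = distr M (S \<Otimes>\<^sub>M T) (\<lambda>x. (A x, B x))"
    using ind indep_var_distribution_eq by blast
  interpret X: prob_space "distr M S A" by (rule prob_space_distr) fact
  interpret Y: prob_space "distr M T B" by (rule prob_space_distr) fact
  interpret XY: pair_prob_space "distr M S A" "distr M T B" ..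
  have hm: "h \<in> borel_measurable (distr M S A \<Otimes>\<^sub>M distr M T B)"
    using h by (simp add: eq)
  have "(\<integral>\<^sup>+\<omega>. h (A \<omega>, B \<omega>) \<partial>M) = integral\<^sup>N (distr M (S \<Otimes>\<^sub>M T) (\<lambda>x. (A x, B x))) h"
    using rv h by (subst nn_integral_distr) (auto intro: measurable_Pair)
  also have "\<dots> = integral\<^sup>N (distr M S A \<Otimes>\<^sub>M distr M T B) h" by (simp add: eq)
  also have "\<dots> = (\<integral>\<^sup>+b. \<integral>\<^sup>+a. h (a, b) \<partial>distr M S A \<partial>distr M T B)"
    using XY.nn_integral_snd[OF hm] by simp
  also have "\<dots> = (\<integral>\<^sup>+b. (\<integral>\<^sup>+\<omega>. h (A \<omega>, b) \<partial>M) \<partial>distr M T B)"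
  proof (rule nn_integral_cong)
    fix b assume "b \<in> space (distr M T B)"
    then have "b \<in> space T" by simp
    then show "(\<integral>\<^sup>+a. h (a, b) \<partial>distr M S A) = (\<integral>\<^sup>+\<omega>. h (A \<omega>, b) \<partial>M)"
      using rv h by (subst nn_integral_distr) (auto intro: measurable_Pair2')
  qed
  finally show ?thesis .
qed




lemma (in prob_space) hoeff_gen:
  assumes X: "X \<in> borel_measurable M" and E: "expectation X = 0"
    and bd: "\<And>\<omega>. \<omega> \<in> space M \<Longrightarrow> \<bar>X \<omega>\<bar> \<le> u"
  shows "(\<integral>\<^sup>+\<omega>. ennreal (exp (l * X \<omega>)) \<partial>M) \<le> ennreal (exp (l\<^sup>2 * u\<^sup>2 / 2))"
proof -
  have AE1: "AE x in M. X x \<in> {-u..u}" using bd by (force intro!: AE_I2 simp: abs_le_iff)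
  have AE2: "AE x in M. - X x \<in> {-u..u}" using bd by (auto intro!: AE_I2 simp: abs_le_iff)
  interpret I1: interval_bounded_random_variable M X "-u" u
    by unfold_locales (use X AE1 in auto)
  interpret I2: interval_bounded_random_variable M "\<lambda>x. - X x" "-u" u
    by unfold_locales (use X AE2 in auto)
  have e: "(l\<^sup>2 * (u - - u)\<^sup>2 / 8) = l\<^sup>2 * u\<^sup>2 / 2" by (simp add: power2_eq_square field_simps)
  consider "l > 0" | "l = 0" | "l < 0" by linarith
  then show ?thesis
  proof cases
    case 1 then show ?thesis using I1.Hoeffdings_lemma_nn_integral_0[OF 1 E] e by simp
  next
    case 2 then show ?thesis by (simp add: emeasure_space_1)
  next
    case 3
    have "expectation (\<lambda>x. - X x) = 0" using E by simp
    from I2.Hoeffdings_lemma_nn_integral_0[of "-l", OF _ this] 3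
    show ?thesis using e by simp
  qed
qed




lemma sets_Ex_nat:
  assumes "\<And>k. f k \<in> borel_measurable N"
  shows "{p\<in>space N. \<exists>k::nat. (t::real) \<le> f k p} \<in> sets N"
proof -
  have [measurable]: "\<And>k. f k \<in> borel_measurable N" by (rule assms)
  show ?thesis by measurable
qed

lemma snd_comp_meas:
  assumes "j \<in> J"
  shows "(\<lambda>p. snd p j) \<in> borel_measurable (S \<Otimes>\<^sub>M PiM J (\<lambda>_. (borel :: real measure)))"
  using assms by measurable

lemma (in prob_space) maximal_theta:
  fixes X :: "nat \<Rightarrow> 'a \<Rightarrow> real" and r :: "nat \<Rightarrow> nat" and c :: "nat \<Rightarrow> real"
  assumes "finite I" "inj_on r I" "indep_vars (\<lambda>_. borel) X I"
    "\<And>i. i\<in>I \<Longrightarrow> expectation (X i) = 0"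
    "\<And>i \<omega>. i\<in>I \<Longrightarrow> \<omega>\<in>space M \<Longrightarrow> \<bar>X i \<omega>\<bar> \<le> c i" "\<theta> > 0"
  shows "emeasure M {\<omega>\<in>space M. \<exists>k. t \<le> (\<Sum>j\<in>{j\<in>I. k \<le> r j}. X j \<omega>)}
          \<le> ennreal (exp (-\<theta>*t) * exp (\<theta>\<^sup>2 * (\<Sum>i\<in>I. (c i)\<^sup>2) / 2))"
  using assms
proof (induction "card I" arbitrary: I t rule: less_induct)
  case less
  note fin = less.prems(1) and inj = less.prems(2) and ind = less.prems(3)
    and E = less.prems(4) and bd = less.prems(5)
  have rvX: "\<And>i. i \<in> I \<Longrightarrow> X i \<in> borel_measurable M"
    using ind by (auto simp: indep_vars_def)
  show ?case
  proof (cases "t \<le> 0 \<or> I = {}")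
    case True
    let ?E = "{\<omega>\<in>space M. \<exists>k. t \<le> (\<Sum>j\<in>{j\<in>I. k \<le> r j}. X j \<omega>)}"
    show ?thesis
    proof (cases "t \<le> 0")
      case t: True
      have e1: "1 \<le> exp (-\<theta>*t)" using t \<open>\<theta>>0\<close> by (simp add: mult_nonneg_nonpos)
      have e2: "1 \<le> exp (\<theta>\<^sup>2 * (\<Sum>i\<in>I. (c i)\<^sup>2) / 2)" by (simp add: sum_nonneg)
      have "(1::real) \<le> exp (-\<theta>*t) * exp (\<theta>\<^sup>2 * (\<Sum>i\<in>I. (c i)\<^sup>2) / 2)"
        using mult_mono[OF e1 e2] by simp
      then have "ennreal 1 \<le> ennreal (exp (-\<theta>*t) * exp (\<theta>\<^sup>2 * (\<Sum>i\<in>I. (c i)\<^sup>2) / 2))"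
        by (rule ennreal_leI)
      moreover have "emeasure M ?E \<le> 1"
        by (rule order_trans[OF emeasure_space]) (simp add: emeasure_space_1)
      ultimately show ?thesis unfolding ennreal_1 by (rule order_trans[rotated])
    next
      case False
      with True have "?E = {}" by auto
      then show ?thesis by (simp only: emeasure_empty zero_le)
    qed
  next
    case False
    then have tpos: "t > 0" and Ine: "I \<noteq> {}" by auto
    have "Max (r ` I) \<in> r ` I" using fin Ine by (intro Max_in) auto
    then obtain i0 where i00: "i0 \<in> I" "r i0 = Max (r ` I)" by auto
    have i0: "i0 \<in> I" "\<And>j. j \<in> I \<Longrightarrow> r j \<le> r i0"
      using i00 fin by (auto intro: Max_ge)
    define I' where "I' = I - {i0}"
    have I: "I = insert i0 I'" "i0 \<notin> I'" using i0 by (auto simp: I'_def)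
    have finI': "finite I'" using fin by (simp add: I'_def)
    have cardI': "card I' < card I" unfolding I'_def by (rule card_Diff1_less[OF fin i0(1)])
    define K' where "K' = exp (\<theta>\<^sup>2 * (\<Sum>i\<in>I'. (c i)\<^sup>2) / 2)"
    have IH: "emeasure M {\<omega>\<in>space M. \<exists>k. tt \<le> (\<Sum>j\<in>{j\<in>I'. k \<le> r j}. X j \<omega>)}
          \<le> ennreal (exp (-\<theta>*tt) * K')" for tt
      unfolding K'_def
    proof (rule less.hyps[OF cardI' finI'])
      show "inj_on r I'" using inj by (rule inj_on_subset) (auto simp: I'_def)
      show "indep_vars (\<lambda>_. borel) X I'" by (rule indep_vars_subset[OF ind]) (auto simp: I'_def)
      show "\<And>i. i \<in> I' \<Longrightarrow> expectation (X i) = 0" using E by (simp add: I'_def)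
      show "\<And>i \<omega>. i \<in> I' \<Longrightarrow> \<omega> \<in> space M \<Longrightarrow> \<bar>X i \<omega>\<bar> \<le> c i" using bd by (simp add: I'_def)
    qed (rule \<open>\<theta>>0\<close>)
    define Sset where "Sset = {\<omega>\<in>space M. \<exists>k. t \<le> (\<Sum>j\<in>{j\<in>I'. k \<le> r j}. X j \<omega>) + X i0 \<omega>}"
    have mI': "(\<lambda>\<omega>. \<Sum>j\<in>{j\<in>I'. k \<le> r j}. X j \<omega>) \<in> borel_measurable M" for k
      by (rule borel_measurable_sum) (use rvX I in auto)
    have SsetM: "Sset \<in> sets M" unfolding Sset_def
      by (rule sets_Ex_nat, rule borel_measurable_add[OF mI' rvX[OF i0(1)]])
    have sub: "{\<omega>\<in>space M. \<exists>k. t \<le> (\<Sum>j\<in>{j\<in>I. k \<le> r j}. X j \<omega>)} \<subseteq> Sset"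
    proof safe
      fix \<omega> k assume \<omega>: "\<omega> \<in> space M" and tk: "t \<le> (\<Sum>j\<in>{j\<in>I. k \<le> r j}. X j \<omega>)"
      show "\<omega> \<in> Sset"
      proof (cases "k \<le> r i0")
        case True
        have "{j\<in>I. k \<le> r j} = insert i0 {j\<in>I'. k \<le> r j}" using True I by auto
        then have "(\<Sum>j\<in>{j\<in>I. k \<le> r j}. X j \<omega>) = X i0 \<omega> + (\<Sum>j\<in>{j\<in>I'. k \<le> r j}. X j \<omega>)"
          using finI' I by simp
        then show ?thesis using tk \<omega> unfolding Sset_def by (auto intro!: exI[of _ k])
      next
        case False
        have "\<not> k \<le> r j" if "j \<in> I" for j
          using i0(2)[OF that] False by linarith
        then have "{j\<in>I. k \<le> r j} = {}" by blast
        then have "(\<Sum>j\<in>{j\<in>I. k \<le> r j}. X j \<omega>) = 0" by (simp only: sum.empty)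
        then show ?thesis using tk tpos by linarith
      qed
    qed
    let ?A = "\<lambda>\<omega>. restrict (\<lambda>i. X i \<omega>) {i0}"
    let ?B = "\<lambda>\<omega>. restrict (\<lambda>i. X i \<omega>) I'"
    let ?S = "PiM {i0} (\<lambda>_. borel) :: (nat \<Rightarrow> real) measure"
    let ?T = "PiM I' (\<lambda>_. borel) :: (nat \<Rightarrow> real) measure"
    define H where "H = {p\<in>space (?S \<Otimes>\<^sub>M ?T). \<exists>k. t \<le> (\<Sum>j\<in>{j\<in>I'. k \<le> r j}. snd p j) + fst p i0}"
    have HM: "H \<in> sets (?S \<Otimes>\<^sub>M ?T)" unfolding H_def
      apply (rule sets_Ex_nat)
      apply (rule borel_measurable_add)
      apply (rule borel_measurable_sum)
      apply (rule snd_comp_meas)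
      apply simp
      apply measurable
      done
    define h where "h = (\<lambda>p::(nat \<Rightarrow> real) \<times> (nat \<Rightarrow> real). indicator H p :: ennreal)"
    have spAB: "(?A \<omega>, ?B \<omega>) \<in> space (?S \<Otimes>\<^sub>M ?T)" for \<omega>
      by (auto simp: space_pair_measure space_PiM)
    have indAB: "indep_var ?S ?A ?T ?B"
      by (rule indep_var_restrict[OF ind]) (use I i0 in auto)
    have hm: "h \<in> borel_measurable (?S \<Otimes>\<^sub>M ?T)"
      unfolding h_def using HM by simp
    have "emeasure M Sset = (\<integral>\<^sup>+\<omega>. h (?A \<omega>, ?B \<omega>) \<partial>M)"
    proof -
      from SsetM have "emeasure M Sset = (\<integral>\<^sup>+\<omega>. indicator Sset \<omega> \<partial>M)" by simp
      also have "\<dots> = (\<integral>\<^sup>+\<omega>. h (?A \<omega>, ?B \<omega>) \<partial>M)"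
        by (rule nn_integral_cong) (use spAB in \<open>auto simp: h_def Sset_def H_def indicator_def\<close>)
      finally show ?thesis .
    qed
    also have "\<dots> = (\<integral>\<^sup>+a. (\<integral>\<^sup>+\<omega>. h (a, ?B \<omega>) \<partial>M) \<partial>distr M ?S ?A)"
      by (rule cond1[OF indAB hm])
    also have "\<dots> \<le> (\<integral>\<^sup>+a. ennreal (exp (-\<theta>*(t - a i0)) * K') \<partial>distr M ?S ?A)"
    proof (rule nn_integral_mono)
      fix a assume "a \<in> space (distr M ?S ?A)"
      then have a: "a \<in> space ?S" by simp
      have "(\<integral>\<^sup>+\<omega>. h (a, ?B \<omega>) \<partial>M)
          = emeasure M {\<omega>\<in>space M. \<exists>k. t - a i0 \<le> (\<Sum>j\<in>{j\<in>I'. k \<le> r j}. X j \<omega>)}"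
      proof -
        have m: "{\<omega>\<in>space M. \<exists>k. t - a i0 \<le> (\<Sum>j\<in>{j\<in>I'. k \<le> r j}. X j \<omega>)} \<in> sets M"
          by (rule sets_Ex_nat[OF mI'])
        show ?thesis
          by (subst nn_integral_indicator[OF m, symmetric], rule nn_integral_cong)
             (use a in \<open>auto simp: h_def H_def indicator_def space_pair_measure space_PiM diff_le_eq\<close>)
      qed
      also have "\<dots> \<le> ennreal (exp (-\<theta>*(t - a i0)) * K')" by (rule IH)
      finally show "(\<integral>\<^sup>+\<omega>. h (a, ?B \<omega>) \<partial>M) \<le> ennreal (exp (-\<theta>*(t - a i0)) * K')" .
    qed
    also have "\<dots> = (\<integral>\<^sup>+\<omega>. ennreal (exp (-\<theta>*(t - X i0 \<omega>)) * K') \<partial>M)"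
      using rvX i0 by (subst nn_integral_distr) auto
    also have "\<dots> = (\<integral>\<^sup>+\<omega>. ennreal (exp (-\<theta>*t) * K') * ennreal (exp (\<theta> * X i0 \<omega>)) \<partial>M)"
    proof (rule nn_integral_cong)
      fix \<omega>
      have "exp (-\<theta>*(t - X i0 \<omega>)) = exp (-\<theta>*t + \<theta> * X i0 \<omega>)"
        by (rule arg_cong[where f=exp]) (simp add: algebra_simps)
      also have "\<dots> = exp (-\<theta>*t) * exp (\<theta> * X i0 \<omega>)" by (rule exp_add)
      finally show "ennreal (exp (-\<theta>*(t - X i0 \<omega>)) * K') = ennreal (exp (-\<theta>*t) * K') * ennreal (exp (\<theta> * X i0 \<omega>))"
        by (simp add: ennreal_mult'[symmetric] K'_def mult_ac)
    qed
    also have "\<dots> = ennreal (exp (-\<theta>*t) * K') * (\<integral>\<^sup>+\<omega>. ennreal (exp (\<theta> * X i0 \<omega>)) \<partial>M)"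
      using rvX i0 by (subst nn_integral_cmult) auto
    also have "\<dots> \<le> ennreal (exp (-\<theta>*t) * K') * ennreal (exp (\<theta>\<^sup>2 * (c i0)\<^sup>2 / 2))"
      by (rule mult_left_mono[OF hoeff_gen]) (use rvX i0 E bd in auto)
    also have "\<dots> = ennreal (exp (-\<theta>*t) * exp (\<theta>\<^sup>2 * (\<Sum>i\<in>I. (c i)\<^sup>2) / 2))"
    proof -
      have "(\<Sum>i\<in>I. (c i)\<^sup>2) = (c i0)\<^sup>2 + (\<Sum>i\<in>I'. (c i)\<^sup>2)" using I finI' by simp
      then have "exp (\<theta>\<^sup>2 * (\<Sum>i\<in>I. (c i)\<^sup>2) / 2) = K' * exp (\<theta>\<^sup>2 * (c i0)\<^sup>2 / 2)"
        unfolding K'_def by (simp add: exp_add[symmetric] distrib_left add_divide_distrib)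
      then show ?thesis by (simp add: ennreal_mult'[symmetric] K'_def mult_ac)
    qed
    finally have "emeasure M Sset \<le> ennreal (exp (-\<theta>*t) * exp (\<theta>\<^sup>2 * (\<Sum>i\<in>I. (c i)\<^sup>2) / 2))" .
    moreover note SsetM
    ultimately show ?thesis using sub by (meson emeasure_mono order_trans)
  qed
qed




lemma (in prob_space) maximal:
  fixes X :: "nat \<Rightarrow> 'a \<Rightarrow> real" and r :: "nat \<Rightarrow> nat" and c :: "nat \<Rightarrow> real"
  assumes "finite I" "inj_on r I" "indep_vars (\<lambda>_. borel) X I"
    "\<And>i. i\<in>I \<Longrightarrow> expectation (X i) = 0"
    "\<And>i \<omega>. i\<in>I \<Longrightarrow> \<omega>\<in>space M \<Longrightarrow> \<bar>X i \<omega>\<bar> \<le> c i"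
    and t: "t \<ge> 0" and V: "(\<Sum>i\<in>I. (c i)\<^sup>2) > 0"
  shows "measure M {\<omega>\<in>space M. \<exists>k. t \<le> (\<Sum>j\<in>{j\<in>I. k \<le> r j}. X j \<omega>)}
          \<le> exp (- t\<^sup>2 / (2 * (\<Sum>i\<in>I. (c i)\<^sup>2)))"
proof (cases "t = 0")
  case True
  then show ?thesis by simp
next
  case False
  let ?V = "(\<Sum>i\<in>I. (c i)\<^sup>2)"
  define \<theta> where "\<theta> = t / ?V"
  have th: "\<theta> > 0" using False t V by (simp add: \<theta>_def)
  have e: "exp (-\<theta>*t) * exp (\<theta>\<^sup>2 * ?V / 2) = exp (- t\<^sup>2 / (2 * ?V))"
  proof -
    have "-\<theta>*t + \<theta>\<^sup>2 * ?V / 2 = - t\<^sup>2 / (2 * ?V)"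
      using V by (simp add: \<theta>_def power2_eq_square field_simps)
    then show ?thesis by (simp add: exp_add[symmetric])
  qed
  have "emeasure M {\<omega>\<in>space M. \<exists>k. t \<le> (\<Sum>j\<in>{j\<in>I. k \<le> r j}. X j \<omega>)}
          \<le> ennreal (exp (- t\<^sup>2 / (2 * ?V)))"
    using maximal_theta[OF assms(1-5) th, of t] e by simp
  then show ?thesis
    by (simp add: emeasure_eq_measure ennreal_le_iff)
qed




lemma (in prob_space) azuma_exp:
  fixes X :: "nat \<Rightarrow> 'a \<Rightarrow> real" and c :: "nat \<Rightarrow> real" and g :: "nat \<Rightarrow> (nat \<Rightarrow> real) \<Rightarrow> real"
  assumes "finite I" "indep_vars (\<lambda>_. borel) X I"
    "\<And>i. i\<in>I \<Longrightarrow> expectation (X i) = 0"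
    "\<And>i \<omega>. i\<in>I \<Longrightarrow> \<omega>\<in>space M \<Longrightarrow> \<bar>X i \<omega>\<bar> \<le> u"
    "\<And>k y. \<bar>g k y\<bar> \<le> B"
    "\<And>k y y'. (\<And>j. k < j \<Longrightarrow> y j = y' j) \<Longrightarrow> g k y = g k y'"
    "\<And>k J. g k \<in> borel_measurable (PiM J (\<lambda>_. borel))"
  shows "(\<integral>\<^sup>+\<omega>. ennreal (exp (\<theta> * (\<Sum>k\<in>I. c k * X k \<omega> * g k (restrict (\<lambda>j. X j \<omega>) I)))) \<partial>M)
           \<le> ennreal (exp (\<theta>\<^sup>2 * u\<^sup>2 * B\<^sup>2 * (\<Sum>k\<in>I. (c k)\<^sup>2) / 2))"
  using assms
proof (induction "card I" arbitrary: I rule: less_induct)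
  case less
  note fin = less.prems(1) and ind = less.prems(2)
    and E = less.prems(3) and bd = less.prems(4) and gB = less.prems(5)
    and gdep = less.prems(6) and gm = less.prems(7)
  have rvX: "\<And>i. i \<in> I \<Longrightarrow> X i \<in> borel_measurable M"
    using ind by (auto simp: indep_vars_def)
  show ?case
  proof (cases "I = {}")
    case True
    then show ?thesis by (simp add: emeasure_space_1)
  next
    case False
    define i0 where "i0 = Min I"
    have i0: "i0 \<in> I" "\<And>j. j \<in> I \<Longrightarrow> i0 \<le> j" using fin False by (auto simp: i0_def)
    define I' where "I' = I - {i0}"
    have I: "I = insert i0 I'" "i0 \<notin> I'" using i0 by (auto simp: I'_def)
    have finI': "finite I'" using fin by (simp add: I'_def)
    have cardI': "card I' < card I" unfolding I'_def by (rule card_Diff1_less[OF fin i0(1)])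
    define K' where "K' = exp (\<theta>\<^sup>2 * u\<^sup>2 * B\<^sup>2 * (\<Sum>k\<in>I'. (c k)\<^sup>2) / 2)"
    define F' where "F' = (\<lambda>y. \<Sum>k\<in>I'. c k * y k * g k y)"
    have IH: "(\<integral>\<^sup>+\<omega>. ennreal (exp (\<theta> * (\<Sum>k\<in>I'. c k * X k \<omega> * g k (restrict (\<lambda>j. X j \<omega>) I')))) \<partial>M)
           \<le> ennreal K'"
      unfolding K'_def
    proof (rule less.hyps[OF cardI' finI'])
      show "indep_vars (\<lambda>_. borel) X I'" by (rule indep_vars_subset[OF ind]) (auto simp: I'_def)
      show "\<And>i. i \<in> I' \<Longrightarrow> expectation (X i) = 0" using E by (simp add: I'_def)
      show "\<And>i \<omega>. i \<in> I' \<Longrightarrow> \<omega> \<in> space M \<Longrightarrow> \<bar>X i \<omega>\<bar> \<le> u" using bd by (simp add: I'_def)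
      show "\<And>k y. \<bar>g k y\<bar> \<le> B" by (rule gB)
      show "\<And>k y y'. (\<And>j. k < j \<Longrightarrow> y j = y' j) \<Longrightarrow> g k y = g k y'" by (rule gdep)
      show "\<And>k J. g k \<in> borel_measurable (PiM J (\<lambda>_. borel))" by (rule gm)
    qed
    let ?A = "\<lambda>\<omega>. restrict (\<lambda>i. X i \<omega>) {i0}"
    let ?B = "\<lambda>\<omega>. restrict (\<lambda>i. X i \<omega>) I'"
    let ?S = "PiM {i0} (\<lambda>_. borel) :: (nat \<Rightarrow> real) measure"
    let ?T = "PiM I' (\<lambda>_. borel) :: (nat \<Rightarrow> real) measure"
    have indAB: "indep_var ?S ?A ?T ?B"
      by (rule indep_var_restrict[OF ind]) (use I i0 in auto)
    have gagree: "g k (restrict (\<lambda>j. X j \<omega>) I) = g k (?B \<omega>)" if "k \<in> I" for k \<omega>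
    proof (rule gdep)
      fix j assume "k < j"
      then have "j \<noteq> i0" using i0(2)[OF that] by auto
      then show "restrict (\<lambda>j. X j \<omega>) I j = ?B \<omega> j" using I by auto
    qed
    have F'm: "F' \<in> borel_measurable ?T" unfolding F'_def
    proof (rule borel_measurable_sum)
      fix k assume "k \<in> I'"
      then show "(\<lambda>y. c k * y k * g k y) \<in> borel_measurable ?T" using gm[of k I'] by measurable
    qed
    have Bm: "?B \<in> measurable M ?T" by (rule measurable_restrict) (use rvX I in auto)
    have F'Bm: "(\<lambda>\<omega>. F' (?B \<omega>)) \<in> borel_measurable M" by (rule measurable_compose[OF Bm F'm])
    define h where "h = (\<lambda>p::(nat \<Rightarrow> real) \<times> (nat \<Rightarrow> real).
        ennreal (exp (\<theta> * (c i0 * fst p i0 * g i0 (snd p) + F' (snd p)))))"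
    have hm: "h \<in> borel_measurable (?S \<Otimes>\<^sub>M ?T)"
      unfolding h_def using gm[of i0 I'] F'm by measurable
    have "(\<integral>\<^sup>+\<omega>. ennreal (exp (\<theta> * (\<Sum>k\<in>I. c k * X k \<omega> * g k (restrict (\<lambda>j. X j \<omega>) I)))) \<partial>M)
        = (\<integral>\<^sup>+\<omega>. h (?A \<omega>, ?B \<omega>) \<partial>M)"
    proof (rule nn_integral_cong)
      fix \<omega>
      have "(\<Sum>k\<in>I. c k * X k \<omega> * g k (restrict (\<lambda>j. X j \<omega>) I))
          = (\<Sum>k\<in>I. c k * X k \<omega> * g k (?B \<omega>))"
        by (rule sum.cong) (simp_all add: gagree)
      also have "\<dots> = c i0 * X i0 \<omega> * g i0 (?B \<omega>) + (\<Sum>k\<in>I'. c k * X k \<omega> * g k (?B \<omega>))"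
        using I finI' by simp
      also have "(\<Sum>k\<in>I'. c k * X k \<omega> * g k (?B \<omega>)) = F' (?B \<omega>)"
        unfolding F'_def by (rule sum.cong) auto
      finally have eq: "(\<Sum>k\<in>I. c k * X k \<omega> * g k (restrict (\<lambda>j. X j \<omega>) I))
          = c i0 * X i0 \<omega> * g i0 (?B \<omega>) + F' (?B \<omega>)" .
      show "ennreal (exp (\<theta> * (\<Sum>k\<in>I. c k * X k \<omega> * g k (restrict (\<lambda>j. X j \<omega>) I))))
          = h (?A \<omega>, ?B \<omega>)" unfolding h_def fst_conv snd_conv eq by simp
    qed
    also have "\<dots> = (\<integral>\<^sup>+y. (\<integral>\<^sup>+\<omega>. h (?A \<omega>, y) \<partial>M) \<partial>distr M ?T ?B)"
      by (rule cond2[OF indAB hm])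
    also have "\<dots> \<le> (\<integral>\<^sup>+y. ennreal (exp (\<theta> * F' y)) * ennreal (exp (\<theta>\<^sup>2 * u\<^sup>2 * B\<^sup>2 * (c i0)\<^sup>2 / 2)) \<partial>distr M ?T ?B)"
    proof (rule nn_integral_mono)
      fix y
      have "(\<integral>\<^sup>+\<omega>. h (?A \<omega>, y) \<partial>M)
          = (\<integral>\<^sup>+\<omega>. ennreal (exp (\<theta> * F' y)) * ennreal (exp ((\<theta> * c i0 * g i0 y) * X i0 \<omega>)) \<partial>M)"
      proof (rule nn_integral_cong)
        fix \<omega>
        have "\<theta> * (c i0 * X i0 \<omega> * g i0 y + F' y) = \<theta> * F' y + (\<theta> * c i0 * g i0 y) * X i0 \<omega>"
          by (simp add: distrib_left mult_ac)
        then have "exp (\<theta> * (c i0 * X i0 \<omega> * g i0 y + F' y)) = exp (\<theta> * F' y) * exp ((\<theta> * c i0 * g i0 y) * X i0 \<omega>)"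
          by (simp add: exp_add)
        then show "h (?A \<omega>, y) = ennreal (exp (\<theta> * F' y)) * ennreal (exp ((\<theta> * c i0 * g i0 y) * X i0 \<omega>))"
          by (simp add: h_def ennreal_mult'[symmetric])
      qed
      also have "\<dots> = ennreal (exp (\<theta> * F' y)) * (\<integral>\<^sup>+\<omega>. ennreal (exp ((\<theta> * c i0 * g i0 y) * X i0 \<omega>)) \<partial>M)"
        using rvX[OF i0(1)] by (subst nn_integral_cmult) auto
      also have "\<dots> \<le> ennreal (exp (\<theta> * F' y)) * ennreal (exp ((\<theta> * c i0 * g i0 y)\<^sup>2 * u\<^sup>2 / 2))"
        by (rule mult_left_mono[OF hoeff_gen]) (use rvX i0 E bd in auto)
      also have "\<dots> \<le> ennreal (exp (\<theta> * F' y)) * ennreal (exp (\<theta>\<^sup>2 * u\<^sup>2 * B\<^sup>2 * (c i0)\<^sup>2 / 2))"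
      proof (rule mult_left_mono)
        have "\<bar>g i0 y\<bar> \<le> \<bar>B\<bar>" using gB[of i0 y] by linarith
        then have gg: "(g i0 y)\<^sup>2 \<le> B\<^sup>2" by (simp only: abs_le_square_iff)
        have "(\<theta> * c i0 * g i0 y)\<^sup>2 * u\<^sup>2 = (\<theta>\<^sup>2 * u\<^sup>2 * (c i0)\<^sup>2) * (g i0 y)\<^sup>2"
          by (simp add: power_mult_distrib)
        also have "\<dots> \<le> (\<theta>\<^sup>2 * u\<^sup>2 * (c i0)\<^sup>2) * B\<^sup>2"
          by (rule mult_left_mono[OF gg]) simp
        also have "\<dots> = \<theta>\<^sup>2 * u\<^sup>2 * B\<^sup>2 * (c i0)\<^sup>2" by simp
        finally have "(\<theta> * c i0 * g i0 y)\<^sup>2 * u\<^sup>2 \<le> \<theta>\<^sup>2 * u\<^sup>2 * B\<^sup>2 * (c i0)\<^sup>2" .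
        then show "ennreal (exp ((\<theta> * c i0 * g i0 y)\<^sup>2 * u\<^sup>2 / 2)) \<le> ennreal (exp (\<theta>\<^sup>2 * u\<^sup>2 * B\<^sup>2 * (c i0)\<^sup>2 / 2))"
          by (intro ennreal_leI) simp
      qed simp
      finally show "(\<integral>\<^sup>+\<omega>. h (?A \<omega>, y) \<partial>M) \<le> ennreal (exp (\<theta> * F' y)) * ennreal (exp (\<theta>\<^sup>2 * u\<^sup>2 * B\<^sup>2 * (c i0)\<^sup>2 / 2))" .
    qed
    also have "\<dots> = (\<integral>\<^sup>+\<omega>. ennreal (exp (\<theta> * F' (?B \<omega>))) * ennreal (exp (\<theta>\<^sup>2 * u\<^sup>2 * B\<^sup>2 * (c i0)\<^sup>2 / 2)) \<partial>M)"
      using Bm F'm by (subst nn_integral_distr) auto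
    also have "\<dots> = (\<integral>\<^sup>+\<omega>. ennreal (exp (\<theta> * F' (?B \<omega>))) \<partial>M) * ennreal (exp (\<theta>\<^sup>2 * u\<^sup>2 * B\<^sup>2 * (c i0)\<^sup>2 / 2))"
      by (rule nn_integral_multc) (use F'Bm in measurable)
    also have "(\<integral>\<^sup>+\<omega>. ennreal (exp (\<theta> * F' (?B \<omega>))) \<partial>M)
        = (\<integral>\<^sup>+\<omega>. ennreal (exp (\<theta> * (\<Sum>k\<in>I'. c k * X k \<omega> * g k (restrict (\<lambda>j. X j \<omega>) I')))) \<partial>M)"
      unfolding F'_def by (intro nn_integral_cong arg_cong[where f="\<lambda>z. ennreal (exp (\<theta> * z))"] sum.cong) auto
    also have "\<dots> * ennreal (exp (\<theta>\<^sup>2 * u\<^sup>2 * B\<^sup>2 * (c i0)\<^sup>2 / 2))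
        \<le> ennreal K' * ennreal (exp (\<theta>\<^sup>2 * u\<^sup>2 * B\<^sup>2 * (c i0)\<^sup>2 / 2))"
      by (rule mult_right_mono[OF IH]) simp
    also have "\<dots> = ennreal (exp (\<theta>\<^sup>2 * u\<^sup>2 * B\<^sup>2 * (\<Sum>k\<in>I. (c k)\<^sup>2) / 2))"
    proof -
      have "(\<Sum>k\<in>I. (c k)\<^sup>2) = (c i0)\<^sup>2 + (\<Sum>k\<in>I'. (c k)\<^sup>2)" using I finI' by simp
      then have "\<theta>\<^sup>2 * u\<^sup>2 * B\<^sup>2 * (\<Sum>k\<in>I. (c k)\<^sup>2) / 2
          = \<theta>\<^sup>2 * u\<^sup>2 * B\<^sup>2 * (\<Sum>k\<in>I'. (c k)\<^sup>2) / 2 + \<theta>\<^sup>2 * u\<^sup>2 * B\<^sup>2 * (c i0)\<^sup>2 / 2"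
        by (simp add: distrib_left add_divide_distrib)
      then have "exp (\<theta>\<^sup>2 * u\<^sup>2 * B\<^sup>2 * (\<Sum>k\<in>I. (c k)\<^sup>2) / 2) = K' * exp (\<theta>\<^sup>2 * u\<^sup>2 * B\<^sup>2 * (c i0)\<^sup>2 / 2)"
        unfolding K'_def by (simp only: exp_add[symmetric])
      then show ?thesis by (simp add: ennreal_mult'[symmetric] K'_def)
    qed
    finally show ?thesis .
  qed
qed




lemma (in prob_space) exp_markov:
  assumes f: "f \<in> borel_measurable M" and th: "\<theta> \<ge> 0"
  shows "emeasure M {\<omega>\<in>space M. a \<le> f \<omega>} \<le> ennreal (exp (-\<theta>*a)) * (\<integral>\<^sup>+\<omega>. ennreal (exp (\<theta> * f \<omega>)) \<partial>M)"
proof -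
  have sm: "{\<omega>\<in>space M. a \<le> f \<omega>} \<in> sets M" using f by measurable
  have "emeasure M {\<omega>\<in>space M. a \<le> f \<omega>} = (\<integral>\<^sup>+\<omega>. indicator {\<omega>\<in>space M. a \<le> f \<omega>} \<omega> \<partial>M)"
    using sm by simp
  also have "\<dots> \<le> (\<integral>\<^sup>+\<omega>. ennreal (exp (-\<theta>*a)) * ennreal (exp (\<theta> * f \<omega>)) \<partial>M)"
  proof (rule nn_integral_mono)
    fix \<omega> assume "\<omega> \<in> space M"
    show "indicator {\<omega>\<in>space M. a \<le> f \<omega>} \<omega> \<le> ennreal (exp (-\<theta>*a)) * ennreal (exp (\<theta> * f \<omega>))"
    proof (cases "a \<le> f \<omega>")
      case True
      have "0 \<le> -\<theta>*a + \<theta> * f \<omega>" using True th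
        by (metis add.commute diff_ge_0_iff_ge minus_mult_left mult_left_mono right_diff_distrib uminus_add_conv_diff)
      then have "1 \<le> exp (-\<theta>*a) * exp (\<theta> * f \<omega>)" by (simp add: exp_add[symmetric])
      then have "ennreal 1 \<le> ennreal (exp (-\<theta>*a) * exp (\<theta> * f \<omega>))" by (rule ennreal_leI)
      then show ?thesis using True \<open>\<omega> \<in> space M\<close> by (simp add: ennreal_mult'[symmetric])
    qed simp
  qed
  also have "\<dots> = ennreal (exp (-\<theta>*a)) * (\<integral>\<^sup>+\<omega>. ennreal (exp (\<theta> * f \<omega>)) \<partial>M)"
    using f by (subst nn_integral_cmult) auto
  finally show ?thesis .
qed

lemma aux_sq: "(v::real) > 0 \<Longrightarrow> l\<^sup>2 / (sqrt v)\<^sup>2 * v = l\<^sup>2"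
  by simp

lemma (in prob_space) azuma_one:
  fixes X :: "nat \<Rightarrow> 'a \<Rightarrow> real" and c :: "nat \<Rightarrow> real" and g :: "nat \<Rightarrow> (nat \<Rightarrow> real) \<Rightarrow> real"
  assumes "finite I" "indep_vars (\<lambda>_. borel) X I"
    "\<And>i. i\<in>I \<Longrightarrow> expectation (X i) = 0"
    "\<And>i \<omega>. i\<in>I \<Longrightarrow> \<omega>\<in>space M \<Longrightarrow> \<bar>X i \<omega>\<bar> \<le> u"
    "\<And>k y. \<bar>g k y\<bar> \<le> B"
    "\<And>k y y'. (\<And>j. k < j \<Longrightarrow> y j = y' j) \<Longrightarrow> g k y = g k y'"
    "\<And>k J. g k \<in> borel_measurable (PiM J (\<lambda>_. borel))"
    and V: "u\<^sup>2 * B\<^sup>2 * (\<Sum>k\<in>I. (c k)\<^sup>2) > 0" and ll: "ll \<ge> 0"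
  shows "emeasure M {\<omega>\<in>space M. ll * sqrt (u\<^sup>2 * B\<^sup>2 * (\<Sum>k\<in>I. (c k)\<^sup>2))
            \<le> (\<Sum>k\<in>I. c k * X k \<omega> * g k (restrict (\<lambda>j. X j \<omega>) I))} \<le> ennreal (exp (- ll\<^sup>2 / 2))"
proof -
  let ?V = "u\<^sup>2 * B\<^sup>2 * (\<Sum>k\<in>I. (c k)\<^sup>2)"
  let ?S = "\<lambda>\<omega>. (\<Sum>k\<in>I. c k * X k \<omega> * g k (restrict (\<lambda>j. X j \<omega>) I))"
  define \<theta> where "\<theta> = ll / sqrt ?V"
  have th: "\<theta> \<ge> 0" using ll V by (simp add: \<theta>_def)
  have rvX: "\<And>i. i \<in> I \<Longrightarrow> X i \<in> borel_measurable M"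
    using assms(2) by (auto simp: indep_vars_def)
  have Rm: "(\<lambda>\<omega>. restrict (\<lambda>j. X j \<omega>) I) \<in> measurable M (PiM I (\<lambda>_. borel))"
    by (rule measurable_restrict) (use rvX in auto)
  have Sm: "?S \<in> borel_measurable M"
  proof (rule borel_measurable_sum)
    fix k assume "k \<in> I"
    have "(\<lambda>\<omega>. g k (restrict (\<lambda>j. X j \<omega>) I)) \<in> borel_measurable M"
      by (rule measurable_compose[OF Rm assms(7)])
    then show "(\<lambda>\<omega>. c k * X k \<omega> * g k (restrict (\<lambda>j. X j \<omega>) I)) \<in> borel_measurable M"
      using rvX[OF \<open>k \<in> I\<close>] by measurable
  qed
  have "emeasure M {\<omega>\<in>space M. ll * sqrt ?V \<le> ?S \<omega>}
     \<le> ennreal (exp (-\<theta>*(ll * sqrt ?V))) * (\<integral>\<^sup>+\<omega>. ennreal (exp (\<theta> * ?S \<omega>)) \<partial>M)"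
    by (rule exp_markov[OF Sm th])
  also have "\<dots> \<le> ennreal (exp (-\<theta>*(ll * sqrt ?V))) * ennreal (exp (\<theta>\<^sup>2 * u\<^sup>2 * B\<^sup>2 * (\<Sum>k\<in>I. (c k)\<^sup>2) / 2))"
  proof (rule mult_left_mono)
    show "(\<integral>\<^sup>+\<omega>. ennreal (exp (\<theta> * ?S \<omega>)) \<partial>M) \<le> ennreal (exp (\<theta>\<^sup>2 * u\<^sup>2 * B\<^sup>2 * (\<Sum>k\<in>I. (c k)\<^sup>2) / 2))"
      using assms(1-7) by (rule azuma_exp)
  qed (rule zero_le)
  also have "\<dots> = ennreal (exp (- ll\<^sup>2 / 2))"
  proof -
    have sq: "sqrt ?V * sqrt ?V = ?V" using V by simp
    have "-\<theta>*(ll * sqrt ?V) + \<theta>\<^sup>2 * u\<^sup>2 * B\<^sup>2 * (\<Sum>k\<in>I. (c k)\<^sup>2) / 2 = - ll\<^sup>2 / 2"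
    proof -
      have sV: "sqrt ?V \<noteq> 0" using V by (metis less_irrefl real_sqrt_eq_zero_cancel_iff)
      have "-\<theta>*(ll * sqrt ?V) = - ll\<^sup>2" unfolding \<theta>_def using sV by (simp add: power2_eq_square field_simps)
      moreover have "\<theta>\<^sup>2 * u\<^sup>2 * B\<^sup>2 * (\<Sum>k\<in>I. (c k)\<^sup>2) = ll\<^sup>2"
      proof -
        have "\<theta>\<^sup>2 * u\<^sup>2 * B\<^sup>2 * (\<Sum>k\<in>I. (c k)\<^sup>2) = \<theta>\<^sup>2 * ?V" by (simp add: mult_ac)
        also have "\<dots> = ll\<^sup>2 / (sqrt ?V)\<^sup>2 * ?V" by (simp add: \<theta>_def power_divide)
        also have "\<dots> = ll\<^sup>2" using V by (rule aux_sq)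
        finally show ?thesis .
      qed
      ultimately show ?thesis by simp
    qed
    then show ?thesis by (simp add: ennreal_mult'[symmetric] exp_add[symmetric])
  qed
  finally show ?thesis .
qed




lemma comp_meas:
  "(\<lambda>y. y j) \<in> borel_measurable (PiM J (\<lambda>_. (borel :: real measure)))"
proof (cases "j \<in> J")
  case True then show ?thesis by measurable
next
  case False
  have "(\<lambda>y. y j) \<in> borel_measurable (PiM J (\<lambda>_. (borel :: real measure))) \<longleftrightarrow>
        (\<lambda>y. undefined :: real) \<in> borel_measurable (PiM J (\<lambda>_. (borel :: real measure)))"
    by (rule measurable_cong) (use False in \<open>auto simp: space_PiM PiE_def extensional_def\<close>)
  then show ?thesis by simp
qed

lemma comp_meas_snd:
  "(\<lambda>p. snd p j) \<in> borel_measurable (N \<Otimes>\<^sub>M PiM J (\<lambda>_. (borel :: real measure)))"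
  by (rule measurable_compose[OF measurable_snd comp_meas])

lemma comp_meas_fst:
  "(\<lambda>p. fst p j) \<in> borel_measurable (PiM J (\<lambda>_. (borel :: real measure)) \<Otimes>\<^sub>M N)"
  by (rule measurable_compose[OF measurable_fst comp_meas])

definition gq :: "nat \<Rightarrow> real \<Rightarrow> nat \<Rightarrow> (nat \<Rightarrow> real) \<Rightarrow> real" where
  "gq n G k y = (if 0 \<le> (\<Prod>j\<in>{k<..n}. 1 + y j) \<and> (\<Prod>j\<in>{k<..n}. 1 + y j) \<le> G then (\<Prod>j\<in>{k<..n}. 1 + y j) else 0)"

lemma gq_meas: "gq n G k \<in> borel_measurable (PiM J (\<lambda>_. borel))"
proof -
  have p: "(\<lambda>y. \<Prod>j\<in>{k<..n}. 1 + y j) \<in> borel_measurable (PiM J (\<lambda>_. (borel :: real measure)))"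
    using comp_meas by measurable
  show ?thesis unfolding gq_def using p by measurable
qed

lemma test1:
  fixes G l :: real
  shows "{p \<in> space (PiM {2..n} (\<lambda>_. borel) \<Otimes>\<^sub>M PiM {1..n} (\<lambda>_. borel)).
     l * sqrt (\<Sum>k\<in>{2..n}. (\<Sum>i\<in>{1..k}. snd p i)\<^sup>2) < \<bar>\<Sum>k\<in>{2..n}. (\<Sum>i\<in>{1..k}. snd p i) * fst p k * gq n G k (fst p)\<bar>}
     \<in> sets (PiM {2..n} (\<lambda>_. borel) \<Otimes>\<^sub>M PiM {1..n} (\<lambda>_. borel))"
proof -
  have gm: "(\<lambda>p. gq n G k (fst p)) \<in> borel_measurable (PiM {2..n} (\<lambda>_. borel) \<Otimes>\<^sub>M PiM {1..n} (\<lambda>_. borel))" for k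
    by (rule measurable_compose[OF measurable_fst gq_meas])
  show ?thesis using comp_meas_snd comp_meas_fst gm by measurable
qed




lemma rsum_Suc: "m \<ge> 1 \<Longrightarrow> rsum xs ds (Suc m) = (rsum xs ds m + xs (Suc m)) * (1 + ds (Suc m))"
  by (cases m) auto

lemma rsum_err:
  assumes "m \<ge> 1"
  shows "rsum xs ds m - (\<Sum>i=1..m. xs i)
       = (\<Sum>k\<in>{2..m}. (\<Sum>i=1..k. xs i) * ds k * (\<Prod>j\<in>{k<..m}. 1 + ds j))"
  using assms
proof (induction m rule: dec_induct)
  case base
  then show ?case by simp
next
  case (step m)
  let ?S = "\<lambda>k. (\<Sum>i=1..k. xs i)"
  have r: "rsum xs ds (Suc m) = (rsum xs ds m + xs (Suc m)) * (1 + ds (Suc m))"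
    using step.hyps(1) by (rule rsum_Suc)
  have S: "?S (Suc m) = ?S m + xs (Suc m)" by simp
  have "rsum xs ds (Suc m) - ?S (Suc m)
      = (rsum xs ds m - ?S m) * (1 + ds (Suc m)) + ?S (Suc m) * ds (Suc m)"
    unfolding r S by (simp add: algebra_simps)
  also have "(rsum xs ds m - ?S m) * (1 + ds (Suc m))
      = (\<Sum>k\<in>{2..m}. ?S k * ds k * (\<Prod>j\<in>{k<..Suc m}. 1 + ds j))"
  proof -
    have "(rsum xs ds m - ?S m) * (1 + ds (Suc m))
        = (\<Sum>k\<in>{2..m}. ?S k * ds k * (\<Prod>j\<in>{k<..m}. 1 + ds j) * (1 + ds (Suc m)))"
      unfolding step.IH by (simp add: sum_distrib_right)
    also have "\<dots> = (\<Sum>k\<in>{2..m}. ?S k * ds k * (\<Prod>j\<in>{k<..Suc m}. 1 + ds j))"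
    proof (rule sum.cong)
      fix k assume "k \<in> {2..m}"
      then have "{k<..Suc m} = insert (Suc m) {k<..m}" by auto
      then have "(\<Prod>j\<in>{k<..Suc m}. 1 + ds j) = (1 + ds (Suc m)) * (\<Prod>j\<in>{k<..m}. 1 + ds j)"
        by simp
      then show "?S k * ds k * (\<Prod>j\<in>{k<..m}. 1 + ds j) * (1 + ds (Suc m))
          = ?S k * ds k * (\<Prod>j\<in>{k<..Suc m}. 1 + ds j)" by simp
    qed simp
    finally show ?thesis .
  qed
  also have "(\<Sum>k\<in>{2..m}. ?S k * ds k * (\<Prod>j\<in>{k<..Suc m}. 1 + ds j)) + ?S (Suc m) * ds (Suc m)
      = (\<Sum>k\<in>{2..Suc m}. ?S k * ds k * (\<Prod>j\<in>{k<..Suc m}. 1 + ds j))"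
  proof -
    have "{2..Suc m} = insert (Suc m) {2..m}" using step.hyps(1) by auto
    then show ?thesis by simp
  qed
  finally show ?case .
qed




lemma gq_bound: "G \<ge> 0 \<Longrightarrow> \<bar>gq n G k y\<bar> \<le> G"
  by (simp add: gq_def)

lemma gq_dep: "(\<And>j. k < j \<Longrightarrow> y j = y' j) \<Longrightarrow> gq n G k y = gq n G k y'"
proof -
  assume a: "\<And>j. k < j \<Longrightarrow> y j = y' j"
  have "(\<Prod>j\<in>{k<..n}. 1 + y j) = (\<Prod>j\<in>{k<..n}. 1 + y' j)"
    by (rule prod.cong) (auto simp: a)
  then show ?thesis by (simp add: gq_def)
qed

lemma (in prob_space) azuma_cond:
  fixes d :: "nat \<Rightarrow> 'a \<Rightarrow> real" and c :: "nat \<Rightarrow> real"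
  assumes fin: "finite I" and ind: "indep_vars (\<lambda>_. borel) d I"
    and E: "\<And>i. i\<in>I \<Longrightarrow> expectation (d i) = 0"
    and bd: "\<And>i \<omega>. i\<in>I \<Longrightarrow> \<omega>\<in>space M \<Longrightarrow> \<bar>d i \<omega>\<bar> \<le> u"
    and u: "u > 0" and G: "G > 0" and l: "l \<ge> 0"
  shows "emeasure M {\<omega>\<in>space M. l * u * G * sqrt (\<Sum>k\<in>I. (c k)\<^sup>2)
            < \<bar>\<Sum>k\<in>I. c k * d k \<omega> * gq n G k (restrict (\<lambda>j. d j \<omega>) I)\<bar>} \<le> ennreal (2 * exp (- l\<^sup>2 / 2))"
proof (cases "(\<Sum>k\<in>I. (c k)\<^sup>2) = 0")
  case True
  then have "\<forall>k\<in>I. c k = 0" using fin by (simp add: sum_nonneg_eq_0_iff)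
  then have "{\<omega>\<in>space M. l * u * G * sqrt (\<Sum>k\<in>I. (c k)\<^sup>2)
            < \<bar>\<Sum>k\<in>I. c k * d k \<omega> * gq n G k (restrict (\<lambda>j. d j \<omega>) I)\<bar>} = {}"
    using True by simp
  then show ?thesis by (simp only: emeasure_empty zero_le)
next
  case False
  then have Cpos: "(\<Sum>k\<in>I. (c k)\<^sup>2) > 0" by (metis less_eq_real_def sum_nonneg zero_le_power2)
  let ?V = "u\<^sup>2 * G\<^sup>2 * (\<Sum>k\<in>I. (c k)\<^sup>2)"
  have V: "?V > 0" using Cpos u G by simp
  have sV: "sqrt ?V = u * G * sqrt (\<Sum>k\<in>I. (c k)\<^sup>2)"
    using u G by (simp add: real_sqrt_mult)
  have rvX: "\<And>i. i \<in> I \<Longrightarrow> d i \<in> borel_measurable M"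
    using ind by (auto simp: indep_vars_def)
  have Rm: "(\<lambda>\<omega>. restrict (\<lambda>j. d j \<omega>) I) \<in> measurable M (PiM I (\<lambda>_. borel))"
    by (rule measurable_restrict) (use rvX in auto)
  have Sm: "(\<lambda>\<omega>. \<Sum>k\<in>I. c' k * d k \<omega> * gq n G k (restrict (\<lambda>j. d j \<omega>) I)) \<in> borel_measurable M" for c'
  proof (rule borel_measurable_sum)
    fix k assume "k \<in> I"
    have "(\<lambda>\<omega>. gq n G k (restrict (\<lambda>j. d j \<omega>) I)) \<in> borel_measurable M"
      by (rule measurable_compose[OF Rm gq_meas])
    then show "(\<lambda>\<omega>. c' k * d k \<omega> * gq n G k (restrict (\<lambda>j. d j \<omega>) I)) \<in> borel_measurable M"
      using rvX[OF \<open>k \<in> I\<close>] by measurable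
  qed
  let ?A = "\<lambda>c'. {\<omega>\<in>space M. l * sqrt (u\<^sup>2 * G\<^sup>2 * (\<Sum>k\<in>I. (c' k)\<^sup>2))
            \<le> (\<Sum>k\<in>I. c' k * d k \<omega> * gq n G k (restrict (\<lambda>j. d j \<omega>) I))}"
  have Am: "?A c' \<in> sets M" for c' using Sm[of c'] by measurable
  have Ab: "emeasure M (?A c') \<le> ennreal (exp (- l\<^sup>2 / 2))" if "(\<Sum>k\<in>I. (c' k)\<^sup>2) = (\<Sum>k\<in>I. (c k)\<^sup>2)" for c'
  proof (rule azuma_one[OF fin ind E bd])
    show "\<And>k y. \<bar>gq n G k y\<bar> \<le> G" using G by (simp add: gq_bound)
    show "\<And>k y y'. (\<And>j. k < j \<Longrightarrow> y j = y' j) \<Longrightarrow> gq n G k y = gq n G k y'" by (rule gq_dep)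
    show "\<And>k J. gq n G k \<in> borel_measurable (PiM J (\<lambda>_. borel))" by (rule gq_meas)
    show "u\<^sup>2 * G\<^sup>2 * (\<Sum>k\<in>I. (c' k)\<^sup>2) > 0" using V that by simp
  qed (use l in auto)
  have sub: "{\<omega>\<in>space M. l * u * G * sqrt (\<Sum>k\<in>I. (c k)\<^sup>2)
            < \<bar>\<Sum>k\<in>I. c k * d k \<omega> * gq n G k (restrict (\<lambda>j. d j \<omega>) I)\<bar>} \<subseteq> ?A c \<union> ?A (\<lambda>k. - c k)"
  proof
    fix \<omega> assume \<omega>: "\<omega> \<in> {\<omega>\<in>space M. l * u * G * sqrt (\<Sum>k\<in>I. (c k)\<^sup>2)
            < \<bar>\<Sum>k\<in>I. c k * d k \<omega> * gq n G k (restrict (\<lambda>j. d j \<omega>) I)\<bar>}"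
    have neg: "(\<Sum>k\<in>I. - c k * d k \<omega> * gq n G k (restrict (\<lambda>j. d j \<omega>) I))
        = - (\<Sum>k\<in>I. c k * d k \<omega> * gq n G k (restrict (\<lambda>j. d j \<omega>) I))"
      by (simp add: sum_negf[symmetric])
    have sq: "(\<Sum>k\<in>I. (- c k)\<^sup>2) = (\<Sum>k\<in>I. (c k)\<^sup>2)" by simp
    define S where "S = (\<Sum>k\<in>I. c k * d k \<omega> * gq n G k (restrict (\<lambda>j. d j \<omega>) I))"
    have T: "l * sqrt ?V = l * u * G * sqrt (\<Sum>k\<in>I. (c k)\<^sup>2)" unfolding sV by (simp only: mult.assoc)
    have om: "\<omega> \<in> space M" "l * sqrt ?V < \<bar>S\<bar>" using \<omega> unfolding T S_def by auto
    then have "l * sqrt ?V \<le> S \<or> l * sqrt ?V \<le> - S" by linarith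
    then show "\<omega> \<in> ?A c \<union> ?A (\<lambda>k. - c k)"
    proof
      assume "l * sqrt ?V \<le> S" then show ?thesis using om(1) unfolding S_def by simp
    next
      assume "l * sqrt ?V \<le> - S" then show ?thesis using om(1) unfolding S_def neg[symmetric] sq by simp
    qed
  qed
  have "emeasure M {\<omega>\<in>space M. l * u * G * sqrt (\<Sum>k\<in>I. (c k)\<^sup>2)
            < \<bar>\<Sum>k\<in>I. c k * d k \<omega> * gq n G k (restrict (\<lambda>j. d j \<omega>) I)\<bar>} \<le> emeasure M (?A c \<union> ?A (\<lambda>k. - c k))"
    by (rule emeasure_mono[OF sub sets.Un[OF Am Am]])
  also have "\<dots> \<le> emeasure M (?A c) + emeasure M (?A (\<lambda>k. - c k))"
    by (rule emeasure_subadditive[OF Am Am])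
  also have "\<dots> \<le> ennreal (exp (- l\<^sup>2 / 2)) + ennreal (exp (- l\<^sup>2 / 2))"
  proof (rule add_mono)
    show "emeasure M (?A c) \<le> ennreal (exp (- l\<^sup>2 / 2))" by (rule Ab) (rule refl)
    show "emeasure M (?A (\<lambda>k. - c k)) \<le> ennreal (exp (- l\<^sup>2 / 2))" by (rule Ab) simp
  qed
  also have "\<dots> = ennreal (2 * exp (- l\<^sup>2 / 2))"
    by (subst ennreal_plus[symmetric]) auto
  finally show ?thesis .
qed




lemma prod_le_exp:
  fixes a :: "nat \<Rightarrow> real"
  assumes "\<And>j. j \<in> S \<Longrightarrow> \<bar>a j\<bar> \<le> u" "u < 1"
  shows "(\<Prod>j\<in>S. 1 + a j) \<le> exp (\<Sum>j\<in>S. a j)" and "0 \<le> (\<Prod>j\<in>S. 1 + a j)"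
proof -
  have nn: "0 \<le> 1 + a j" if "j \<in> S" for j
    using assms(1)[OF that] assms(2) abs_ge_minus_self[of "a j"] by linarith
  show "0 \<le> (\<Prod>j\<in>S. 1 + a j)" by (rule prod_nonneg) (use nn in auto)
  show "(\<Prod>j\<in>S. 1 + a j) \<le> exp (\<Sum>j\<in>S. a j)"
  proof (cases "finite S")
    case True
    have "(\<Prod>j\<in>S. 1 + a j) \<le> (\<Prod>j\<in>S. exp (a j))"
      by (rule prod_mono) (use nn in \<open>auto simp: exp_ge_add_one_self add.commute\<close>)
    also have "\<dots> = exp (\<Sum>j\<in>S. a j)" using True by (simp add: exp_sum)
    finally show ?thesis .
  qed simp
qed

lemma lam_facts:
  assumes "0 < \<delta>" "\<delta> < 1"
  shows "lam (\<delta>/3) \<ge> 0" "(lam (\<delta>/3))\<^sup>2 = 2 * ln (6/\<delta>)" "exp (- (lam (\<delta>/3))\<^sup>2 / 2) = \<delta> / 6"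
proof -
  have e: "2 / (\<delta>/3) = 6/\<delta>" by simp
  have p: "ln (6/\<delta>) > 0" using assms by simp
  show "lam (\<delta>/3) \<ge> 0" using p by (simp add: lam_def)
  show l2: "(lam (\<delta>/3))\<^sup>2 = 2 * ln (6/\<delta>)" unfolding lam_def e using p by simp
  show "exp (- (lam (\<delta>/3))\<^sup>2 / 2) = \<delta> / 6" unfolding l2 using assms by (simp add: exp_minus exp_ln)
qed




lemma (in prob_space) maxdev:
  fixes X :: "nat \<Rightarrow> 'a \<Rightarrow> real"
  assumes ind: "indep_vars (\<lambda>_. borel) X {1..n}"
    and E: "\<And>i. i\<in>{1..n} \<Longrightarrow> expectation (X i) = 0"
    and bd: "\<And>i \<omega>. i\<in>{1..n} \<Longrightarrow> \<omega>\<in>space M \<Longrightarrow> \<bar>X i \<omega>\<bar> \<le> Cx"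
    and C: "Cx > 0" and l: "l \<ge> 0" and n: "n \<ge> 1"
  shows "measure M {\<omega>\<in>space M. \<exists>k. l * Cx * sqrt (real n) \<le> (\<Sum>j\<in>{j\<in>{1..n}. k \<le> n - j}. X j \<omega>)}
           \<le> exp (- l\<^sup>2 / 2)"
proof -
  have cs: "(\<Sum>i\<in>{1..n}. Cx\<^sup>2) = real n * Cx\<^sup>2" by simp
  have inj: "inj_on (\<lambda>j. n - j) {1..n}" by (auto simp: inj_on_def)
  have "measure M {\<omega>\<in>space M. \<exists>k. l * Cx * sqrt (real n) \<le> (\<Sum>j\<in>{j\<in>{1..n}. k \<le> n - j}. X j \<omega>)}
      \<le> exp (- (l * Cx * sqrt (real n))\<^sup>2 / (2 * (\<Sum>i\<in>{1..n}. Cx\<^sup>2)))"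
  proof (rule maximal[where r="\<lambda>j. n - j" and c="\<lambda>_. Cx", OF _ inj ind E bd])
    show "(\<Sum>i\<in>{1..n}. Cx\<^sup>2) > 0" unfolding cs using n C by simp
  qed (use l C in auto)
  also have "(l * Cx * sqrt (real n))\<^sup>2 / (2 * (\<Sum>i\<in>{1..n}. Cx\<^sup>2)) = l\<^sup>2 / 2"
    unfolding cs using n C by (simp add: power_mult_distrib)
  then have "- (l * Cx * sqrt (real n))\<^sup>2 / (2 * (\<Sum>i\<in>{1..n}. Cx\<^sup>2)) = - l\<^sup>2 / 2"
    by (simp only: minus_divide_left[symmetric])
  finally show ?thesis by simp
qed

lemma aux_div: "(a::real) \<ge> 0 \<Longrightarrow> b \<ge> 0 \<Longrightarrow> 0 < c \<Longrightarrow> c \<le> 1 \<Longrightarrow> a \<le> (a + b) / c"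
proof -
  assume a: "a \<ge> 0" "b \<ge> 0" "0 < c" "c \<le> 1"
  have "a * c \<le> a + b" using a by (metis add_increasing2 mult_left_le)
  then show ?thesis using a by (simp add: le_divide_eq)
qed

lemma aux_half: "(m::real) \<noteq> 0 \<Longrightarrow> a / 2 = a * m / (2 * m)"
  by (simp add: field_simps)

theorem theorem5p2:
  fixes M :: "'a measure" and x d :: "nat \<Rightarrow> 'a \<Rightarrow> real"
    and n :: nat and \<mu>x Cx u \<delta> :: real
  assumes "prob_space M"
    and "n \<ge> 1"
    and "\<And>i. i \<in> {1..n} \<Longrightarrow> x i \<in> borel_measurable M"
    and "\<And>k. k \<in> {2..n} \<Longrightarrow> d k \<in> borel_measurable M"
    and "prob_space.indep_vars M (\<lambda>_. borel) x {1..n}"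
    and "\<And>i. i \<in> {1..n} \<Longrightarrow> prob_space.expectation M (x i) = \<mu>x"
    and "\<And>i \<omega>. i \<in> {1..n} \<Longrightarrow> \<omega> \<in> space M \<Longrightarrow> \<bar>x i \<omega> - \<mu>x\<bar> \<le> Cx"
    and "prob_space.indep_vars M (\<lambda>_. borel) d {2..n}"
    and "\<And>k. k \<in> {2..n} \<Longrightarrow> prob_space.expectation M (d k) = 0"
    and "\<And>k \<omega>. k \<in> {2..n} \<Longrightarrow> \<omega> \<in> space M \<Longrightarrow> \<bar>d k \<omega>\<bar> \<le> u"
    and "0 < u" and "u < 1"
    and "prob_space.indep_var M
           (PiM {2..n} (\<lambda>_. borel)) (\<lambda>\<omega>. \<lambda>k\<in>{2..n}. d k \<omega>)
           (PiM {1..n} (\<lambda>_. borel)) (\<lambda>\<omega>. \<lambda>i\<in>{1..n}. x i \<omega>)"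
    and "0 < \<delta>" and "\<delta> < 1"
  shows "measure M {\<omega> \<in> space M.
           \<bar>rsum (\<lambda>i. x i \<omega>) (\<lambda>k. d k \<omega>) n - (\<Sum>i=1..n. x i \<omega>)\<bar>
             \<le> (1 + gamma_tilde u n (\<delta> / 3))
                * (lam (\<delta> / 3) * \<bar>\<mu>x\<bar> * real n powr (3/2)
                   + (lam (\<delta> / 3))^2 * Cx * real n) * u} \<ge> 1 - \<delta>"
proof -
  interpret P: prob_space M by fact
  note xm = assms(3) and dm = assms(4) and indx = assms(5) and Ex = assms(6) and bx = assms(7)
    and indd = assms(8) and Ed = assms(9) and bd = assms(10) and u0 = assms(11) and u1 = assms(12)
    and indxd = assms(13) and del0 = assms(14) and del1 = assms(15)
  obtain \<omega>0 where \<omega>0: "\<omega>0 \<in> space M" using P.not_empty by blast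
  have Cx0: "Cx \<ge> 0" using bx[of 1 \<omega>0] \<omega>0 assms(2) by (meson abs_ge_zero atLeastAtMost_iff order_trans le_refl)
  define l where "l = lam (\<delta>/3)"
  define G where "G = 1 + gamma_tilde u n (\<delta>/3)"
  have l0: "l \<ge> 0" and l2: "l\<^sup>2 = 2 * ln (6/\<delta>)" and el: "exp (- l\<^sup>2 / 2) = \<delta> / 6"
    using lam_facts[OF del0 del1] by (simp_all add: l_def)
  have Gexp: "G = exp ((l * sqrt (real n) * u + real n * u\<^sup>2) / (1 - u))"
    by (simp add: G_def gamma_tilde_def l_def)
  have Gpos: "G > 0" by (simp add: Gexp)
  define RHS where "RHS = G * (l * \<bar>\<mu>x\<bar> * real n powr (3/2) + l\<^sup>2 * Cx * real n) * u"
  have RHS0: "RHS \<ge> 0" unfolding RHS_def using Gpos l0 Cx0 u0 by (intro mult_nonneg_nonneg add_nonneg_nonneg) auto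
  define Tg where "Tg = {\<omega>\<in>space M. \<bar>rsum (\<lambda>i. x i \<omega>) (\<lambda>k. d k \<omega>) n - (\<Sum>i=1..n. x i \<omega>)\<bar> \<le> RHS}"
  have main: "1 - \<delta> \<le> measure M Tg"
  proof (cases "n = 1")
    case True
    have "Tg = space M" unfolding Tg_def using True RHS0 by auto
    then show ?thesis using del0 by (simp add: P.prob_space)
  next
    case False
    then have n2: "n \<ge> 2" using assms(2) by simp
    let ?P = "PiM {2..n} (\<lambda>_. borel) \<Otimes>\<^sub>M PiM {1..n} (\<lambda>_. borel) :: ((nat \<Rightarrow> real) \<times> (nat \<Rightarrow> real)) measure"
    let ?D = "\<lambda>\<omega>. restrict (\<lambda>j. d j \<omega>) {2..n}"
    let ?X = "\<lambda>\<omega>. restrict (\<lambda>i. x i \<omega>) {1..n}"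
    have Dm: "?D \<in> measurable M (PiM {2..n} (\<lambda>_. borel))"
      by (rule measurable_restrict) (use dm in auto)
    have Xm: "?X \<in> measurable M (PiM {1..n} (\<lambda>_. borel))"
      by (rule measurable_restrict) (use xm in auto)
    have PXm: "(\<lambda>\<omega>. (?D \<omega>, ?X \<omega>)) \<in> measurable M ?P"
      by (rule measurable_Pair[OF Dm Xm])
    define s where "s = (\<lambda>\<omega> k. \<Sum>i=1..k. x i \<omega>)"
    define Q where "Q = (\<lambda>\<omega> k. \<Prod>j\<in>{k<..n}. 1 + d j \<omega>)"
    have errid: "rsum (\<lambda>i. x i \<omega>) (\<lambda>k. d k \<omega>) n - (\<Sum>i=1..n. x i \<omega>)
        = (\<Sum>k\<in>{2..n}. s \<omega> k * d k \<omega> * Q \<omega> k)" for \<omega>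
      unfolding s_def Q_def by (rule rsum_err) (use assms(2) in simp)
    define Tset where "Tset = {p \<in> space ?P. \<bar>\<Sum>k\<in>{2..n}. (\<Sum>i\<in>{1..k}. snd p i) * fst p k * (\<Prod>j\<in>{k<..n}. 1 + fst p j)\<bar> \<le> RHS}"
    have TsetM: "Tset \<in> sets ?P" unfolding Tset_def using comp_meas_snd comp_meas_fst by measurable
    have Tg_eq: "Tg = (\<lambda>\<omega>. (?D \<omega>, ?X \<omega>)) -` Tset \<inter> space M"
    proof -
      have "\<omega> \<in> Tg \<longleftrightarrow> (?D \<omega>, ?X \<omega>) \<in> Tset" if \<omega>: "\<omega> \<in> space M" for \<omega>
      proof -
        have sp: "(?D \<omega>, ?X \<omega>) \<in> space ?P" by (rule measurable_space[OF PXm \<omega>])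
        have eq: "(\<Sum>k\<in>{2..n}. (\<Sum>i\<in>{1..k}. snd (?D \<omega>, ?X \<omega>) i) * fst (?D \<omega>, ?X \<omega>) k
              * (\<Prod>j\<in>{k<..n}. 1 + fst (?D \<omega>, ?X \<omega>) j)) = (\<Sum>k\<in>{2..n}. s \<omega> k * d k \<omega> * Q \<omega> k)"
          unfolding fst_conv snd_conv s_def Q_def
        proof (rule sum.cong[OF refl])
          fix k assume k: "k \<in> {2..n}"
          have "(\<Sum>i\<in>{1..k}. ?X \<omega> i) = (\<Sum>i=1..k. x i \<omega>)" by (rule sum.cong) (use k in auto)
          moreover have "(\<Prod>j\<in>{k<..n}. 1 + ?D \<omega> j) = (\<Prod>j\<in>{k<..n}. 1 + d j \<omega>)" by (rule prod.cong) (use k in auto)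
          moreover have "?D \<omega> k = d k \<omega>" using k by simp
          ultimately show "(\<Sum>i\<in>{1..k}. ?X \<omega> i) * ?D \<omega> k * (\<Prod>j\<in>{k<..n}. 1 + ?D \<omega> j)
              = (\<Sum>i=1..k. x i \<omega>) * d k \<omega> * (\<Prod>j\<in>{k<..n}. 1 + d j \<omega>)" by simp
        qed
        have "\<omega> \<in> Tg \<longleftrightarrow> \<bar>\<Sum>k\<in>{2..n}. s \<omega> k * d k \<omega> * Q \<omega> k\<bar> \<le> RHS"
          unfolding Tg_def using \<omega> errid[of \<omega>] by simp
        moreover have "(?D \<omega>, ?X \<omega>) \<in> Tset \<longleftrightarrow> \<bar>\<Sum>k\<in>{2..n}. s \<omega> k * d k \<omega> * Q \<omega> k\<bar> \<le> RHS"
          unfolding Tset_def mem_Collect_eq eq using sp by simp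
        ultimately show ?thesis by simp
      qed
      then show ?thesis unfolding Tg_def by auto
    qed
    have TgM: "Tg \<in> sets M" unfolding Tg_eq by (rule measurable_sets[OF PXm TsetM])
    define Bd where "Bd = {\<omega>\<in>space M. \<exists>k. l * sqrt (real n) * u \<le> (\<Sum>j\<in>{j\<in>{2..n}. k \<le> j}. d j \<omega>)}"
    have BdM: "Bd \<in> sets M" unfolding Bd_def
      by (rule sets_Ex_nat, rule borel_measurable_sum) (use dm in auto)
    have Bdp: "measure M Bd \<le> \<delta> / 6"
    proof -
      have cs: "(\<Sum>i\<in>{2..n}. u\<^sup>2) = real (n - 1) * u\<^sup>2" by simp
      have n1: "real (n - 1) > 0" using n2 by simp
      have "measure M Bd \<le> exp (- (l * sqrt (real n) * u)\<^sup>2 / (2 * (\<Sum>i\<in>{2..n}. u\<^sup>2)))"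
        unfolding Bd_def
      proof (rule P.maximal[where r="\<lambda>j. j" and c="\<lambda>_. u"])
        show "(\<Sum>i\<in>{2..n}. u\<^sup>2) > 0" unfolding cs using n1 u0 by simp
      qed (use indd Ed bd l0 u0 in auto)
      also have "\<dots> \<le> exp (- l\<^sup>2 / 2)"
      proof -
        have A: "(l * sqrt (real n) * u)\<^sup>2 / (2 * (\<Sum>i\<in>{2..n}. u\<^sup>2)) = l\<^sup>2 * real n / (2 * real (n - 1))"
          unfolding cs using u0 by (simp add: power_mult_distrib)
        have B: "l\<^sup>2 / 2 = l\<^sup>2 * real (n - 1) / (2 * real (n - 1))" using n1 by (intro aux_half) simp
        have C: "l\<^sup>2 * real (n - 1) \<le> l\<^sup>2 * real n" by (rule mult_left_mono) auto
        have "l\<^sup>2 / 2 \<le> l\<^sup>2 * real n / (2 * real (n - 1))"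
          unfolding B by (rule divide_right_mono[OF C]) (use n1 in simp)
        then show ?thesis unfolding minus_divide_left[symmetric] A by simp
      qed
      finally show ?thesis using el by simp
    qed
    define Bx1 where "Bx1 = (if Cx = 0 then {} else {\<omega>\<in>space M. \<exists>k. l * Cx * sqrt (real n) \<le> (\<Sum>j\<in>{j\<in>{1..n}. k \<le> n - j}. x j \<omega> - \<mu>x)})"
    define Bx2 where "Bx2 = (if Cx = 0 then {} else {\<omega>\<in>space M. \<exists>k. l * Cx * sqrt (real n) \<le> (\<Sum>j\<in>{j\<in>{1..n}. k \<le> n - j}. \<mu>x - x j \<omega>)})"
    have xint: "integrable M (x i)" if "i \<in> {1..n}" for i
    proof (rule P.integrable_const_bound[where B="\<bar>\<mu>x\<bar> + Cx"])
      show "AE \<omega> in M. norm (x i \<omega>) \<le> \<bar>\<mu>x\<bar> + Cx"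
      proof (rule AE_I2)
        fix \<omega> assume \<omega>: "\<omega> \<in> space M"
        have "\<bar>x i \<omega>\<bar> \<le> \<bar>x i \<omega> - \<mu>x\<bar> + \<bar>\<mu>x\<bar>" using abs_triangle_ineq[of "x i \<omega> - \<mu>x" \<mu>x] by simp
        then show "norm (x i \<omega>) \<le> \<bar>\<mu>x\<bar> + Cx" using bx[OF that \<omega>] by simp
      qed
    qed (rule xm[OF that])
    have E1: "P.expectation (\<lambda>\<omega>. x i \<omega> - \<mu>x) = 0" if "i \<in> {1..n}" for i
      using xint[OF that] Ex[OF that] by (simp add: P.prob_space)
    have E2: "P.expectation (\<lambda>\<omega>. \<mu>x - x i \<omega>) = 0" if "i \<in> {1..n}" for i
      using xint[OF that] Ex[OF that] by (simp add: P.prob_space)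
    have ind1: "P.indep_vars (\<lambda>_. borel) (\<lambda>i \<omega>. x i \<omega> - \<mu>x) {1..n}"
      by (rule P.indep_vars_compose2[OF indx, where Y="\<lambda>_ z. z - \<mu>x"]) simp
    have ind2: "P.indep_vars (\<lambda>_. borel) (\<lambda>i \<omega>. \<mu>x - x i \<omega>) {1..n}"
      by (rule P.indep_vars_compose2[OF indx, where Y="\<lambda>_ z. \<mu>x - z"]) simp
    have Bx1M: "Bx1 \<in> sets M"
    proof (cases "Cx = 0")
      case True then show ?thesis by (simp add: Bx1_def)
    next
      case False
      then have "Bx1 = {\<omega>\<in>space M. \<exists>k. l * Cx * sqrt (real n) \<le> (\<Sum>j\<in>{j\<in>{1..n}. k \<le> n - j}. x j \<omega> - \<mu>x)}"
        by (simp add: Bx1_def)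
      also have "\<dots> \<in> sets M"
        by (rule sets_Ex_nat, rule borel_measurable_sum, rule borel_measurable_diff) (use xm in auto)
      finally show ?thesis .
    qed
    have Bx2M: "Bx2 \<in> sets M"
    proof (cases "Cx = 0")
      case True then show ?thesis by (simp add: Bx2_def)
    next
      case False
      then have "Bx2 = {\<omega>\<in>space M. \<exists>k. l * Cx * sqrt (real n) \<le> (\<Sum>j\<in>{j\<in>{1..n}. k \<le> n - j}. \<mu>x - x j \<omega>)}"
        by (simp add: Bx2_def)
      also have "\<dots> \<in> sets M"
        by (rule sets_Ex_nat, rule borel_measurable_sum, rule borel_measurable_diff) (use xm in auto)
      finally show ?thesis .
    qed
    have Bx1p: "measure M Bx1 \<le> \<delta> / 6"
    proof (cases "Cx = 0")
      case True then show ?thesis using del0 by (simp add: Bx1_def)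
    next
      case False
      then have C: "Cx > 0" using Cx0 by simp
      have "measure M Bx1 \<le> exp (- l\<^sup>2 / 2)" unfolding Bx1_def using False
        by (simp only: if_False) (rule P.maxdev[OF ind1 E1 bx C l0 assms(2)])
      then show ?thesis using el by simp
    qed
    have Bx2p: "measure M Bx2 \<le> \<delta> / 6"
    proof (cases "Cx = 0")
      case True then show ?thesis using del0 by (simp add: Bx2_def)
    next
      case False
      then have C: "Cx > 0" using Cx0 by simp
      have bx2: "\<bar>\<mu>x - x i \<omega>\<bar> \<le> Cx" if "i \<in> {1..n}" "\<omega> \<in> space M" for i \<omega>
        using bx[OF that] by (simp add: abs_minus_commute)
      have "measure M Bx2 \<le> exp (- l\<^sup>2 / 2)" unfolding Bx2_def using False
        by (simp only: if_False) (rule P.maxdev[OF ind2 E2 bx2 C l0 assms(2)])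
      then show ?thesis using el by simp
    qed
    define Haz where "Haz = {p \<in> space ?P. l * u * G * sqrt (\<Sum>k\<in>{2..n}. (\<Sum>i\<in>{1..k}. snd p i)\<^sup>2)
          < \<bar>\<Sum>k\<in>{2..n}. (\<Sum>i\<in>{1..k}. snd p i) * fst p k * gq n G k (fst p)\<bar>}"
    have HazM: "Haz \<in> sets ?P"
    proof -
      have gm: "(\<lambda>p. gq n G k (fst p)) \<in> borel_measurable ?P" for k
        by (rule measurable_compose[OF measurable_fst gq_meas])
      show ?thesis unfolding Haz_def using comp_meas_snd comp_meas_fst gm by measurable
    qed
    define Baz where "Baz = (\<lambda>\<omega>. (?D \<omega>, ?X \<omega>)) -` Haz \<inter> space M"
    have BazM: "Baz \<in> sets M" unfolding Baz_def by (rule measurable_sets[OF PXm HazM])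
    have Bazp: "measure M Baz \<le> \<delta> / 3"
    proof -
      have hm: "(\<lambda>p. indicator Haz p :: ennreal) \<in> borel_measurable ?P"
        using HazM by simp
      have "emeasure M Baz = (\<integral>\<^sup>+\<omega>. indicator Haz (?D \<omega>, ?X \<omega>) \<partial>M)"
      proof -
        have "emeasure M Baz = (\<integral>\<^sup>+\<omega>. indicator Baz \<omega> \<partial>M)" using BazM by simp
        also have "\<dots> = (\<integral>\<^sup>+\<omega>. indicator Haz (?D \<omega>, ?X \<omega>) \<partial>M)"
          by (rule nn_integral_cong) (auto simp: Baz_def indicator_def)
        finally show ?thesis .
      qed
      also have "\<dots> = (\<integral>\<^sup>+b. (\<integral>\<^sup>+\<omega>. indicator Haz (?D \<omega>, b) \<partial>M) \<partial>distr M (PiM {1..n} (\<lambda>_. borel)) ?X)"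
        by (rule P.cond2[OF indxd hm])
      also have "\<dots> \<le> (\<integral>\<^sup>+b. ennreal (2 * exp (- l\<^sup>2 / 2)) \<partial>distr M (PiM {1..n} (\<lambda>_. borel)) ?X)"
      proof (rule nn_integral_mono)
        fix b assume "b \<in> space (distr M (PiM {1..n} (\<lambda>_. borel)) ?X)"
        then have b: "b \<in> space (PiM {1..n} (\<lambda>_. (borel :: real measure)))" by simp
        define c where "c = (\<lambda>k. \<Sum>i\<in>{1..k}. b i)"
        let ?Sb = "{\<omega>\<in>space M. l * u * G * sqrt (\<Sum>k\<in>{2..n}. (c k)\<^sup>2)
            < \<bar>\<Sum>k\<in>{2..n}. c k * d k \<omega> * gq n G k (restrict (\<lambda>j. d j \<omega>) {2..n})\<bar>}"
        have DbM: "(\<lambda>\<omega>. (?D \<omega>, b)) \<in> measurable M ?P"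
          by (rule measurable_Pair[OF Dm]) (use b in simp)
        have pre: "(\<lambda>\<omega>. (?D \<omega>, b)) -` Haz \<inter> space M = ?Sb"
        proof -
          have "(?D \<omega>, b) \<in> space ?P" if "\<omega> \<in> space M" for \<omega>
            by (rule measurable_space[OF DbM that])
          moreover have "(\<Sum>k\<in>{2..n}. (\<Sum>i\<in>{1..k}. b i) * ?D \<omega> k * gq n G k (?D \<omega>))
              = (\<Sum>k\<in>{2..n}. c k * d k \<omega> * gq n G k (?D \<omega>))" for \<omega>
            unfolding c_def by (rule sum.cong) auto
          ultimately show ?thesis unfolding Haz_def c_def by auto
        qed
        have SbM: "?Sb \<in> sets M" unfolding pre[symmetric] by (rule measurable_sets[OF DbM HazM])
        have "(\<integral>\<^sup>+\<omega>. indicator Haz (?D \<omega>, b) \<partial>M) = (\<integral>\<^sup>+\<omega>. indicator ?Sb \<omega> \<partial>M)"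
          by (rule nn_integral_cong) (use pre in \<open>auto simp: indicator_def\<close>)
        also have "\<dots> = emeasure M ?Sb" using SbM by simp
        also have "\<dots> \<le> ennreal (2 * exp (- l\<^sup>2 / 2))"
          by (rule P.azuma_cond[OF _ indd Ed bd u0 Gpos l0]) simp
        finally show "(\<integral>\<^sup>+\<omega>. indicator Haz (?D \<omega>, b) \<partial>M) \<le> ennreal (2 * exp (- l\<^sup>2 / 2))" .
      qed
      also have "\<dots> = ennreal (2 * exp (- l\<^sup>2 / 2))"
      proof -
        interpret DX: prob_space "distr M (PiM {1..n} (\<lambda>_. borel)) ?X"
          by (rule P.prob_space_distr[OF Xm])
        have "emeasure (distr M (PiM {1..n} (\<lambda>_. borel)) ?X) (space (PiM {1..n} (\<lambda>_. (borel :: real measure)))) = 1"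
          using DX.emeasure_space_1 by simp
        then show ?thesis by simp
      qed
      finally have "emeasure M Baz \<le> ennreal (2 * exp (- l\<^sup>2 / 2))" .
      then have "measure M Baz \<le> 2 * exp (- l\<^sup>2 / 2)"
        by (simp add: P.emeasure_eq_measure ennreal_le_iff)
      then show ?thesis using el by simp
    qed
    have good: "space M - (Bd \<union> Bx1 \<union> Bx2 \<union> Baz) \<subseteq> Tg"
    proof
      fix \<omega> assume "\<omega> \<in> space M - (Bd \<union> Bx1 \<union> Bx2 \<union> Baz)"
      then have \<omega>: "\<omega> \<in> space M" and nBd: "\<omega> \<notin> Bd" and nBx1: "\<omega> \<notin> Bx1" and nBx2: "\<omega> \<notin> Bx2"
        and nBaz: "\<omega> \<notin> Baz" by auto
      have Qb: "0 \<le> Q \<omega> k \<and> Q \<omega> k \<le> G" if k: "k \<in> {2..n}" for k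
      proof -
        have dj: "\<bar>d j \<omega>\<bar> \<le> u" if "j \<in> {k<..n}" for j
          using bd[of j \<omega>] \<omega> that k by auto
        have Q1: "Q \<omega> k \<le> exp (\<Sum>j\<in>{k<..n}. d j \<omega>)" and Q0: "0 \<le> Q \<omega> k"
          unfolding Q_def using prod_le_exp[of "{k<..n}" "\<lambda>j. d j \<omega>" u, OF dj u1] by auto
        have seteq: "{j\<in>{2..n}. Suc k \<le> j} = {k<..n}" using k by auto
        have "(\<Sum>j\<in>{k<..n}. d j \<omega>) < l * sqrt (real n) * u"
          using nBd \<omega> unfolding Bd_def seteq[symmetric] by (auto simp: not_le)
        then have "exp (\<Sum>j\<in>{k<..n}. d j \<omega>) \<le> exp (l * sqrt (real n) * u)" by simp
        also have "\<dots> \<le> G" unfolding Gexp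
          by (subst exp_le_cancel_iff, rule aux_div) (use l0 u0 u1 in auto)
        finally show ?thesis using Q0 Q1 by simp
      qed
      \<comment> \<open>(b) truncation is inactive\<close>
      have gqQ: "gq n G k (?D \<omega>) = Q \<omega> k" if k: "k \<in> {2..n}" for k
      proof -
        have "(\<Prod>j\<in>{k<..n}. 1 + ?D \<omega> j) = Q \<omega> k" unfolding Q_def by (rule prod.cong) (use k in auto)
        then show ?thesis using Qb[OF k] by (simp add: gq_def)
      qed
      have dev: "\<bar>s \<omega> k - real k * \<mu>x\<bar> \<le> l * Cx * sqrt (real n)" if k: "k \<in> {1..n}" for k
      proof (cases "Cx = 0")
        case True
        have "x i \<omega> = \<mu>x" if "i \<in> {1..k}" for i using bx[of i \<omega>] \<omega> that k True by auto
        then have "s \<omega> k = real k * \<mu>x" unfolding s_def by simp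
        then show ?thesis using True by simp
      next
        case False
        have seteq: "{j\<in>{1..n}. n - k \<le> n - j} = {1..k}" using k by auto
        have sub: "(\<Sum>j\<in>{1..k}. x j \<omega> - \<mu>x) = s \<omega> k - real k * \<mu>x"
          unfolding s_def by (simp add: sum_subtractf)
        have sub2: "(\<Sum>j\<in>{1..k}. \<mu>x - x j \<omega>) = real k * \<mu>x - s \<omega> k"
          unfolding s_def by (simp add: sum_subtractf)
        have "\<not> l * Cx * sqrt (real n) \<le> (\<Sum>j\<in>{j\<in>{1..n}. n - k \<le> n - j}. x j \<omega> - \<mu>x)"
          using nBx1 \<omega> False unfolding Bx1_def by auto
        then have 1: "s \<omega> k - real k * \<mu>x < l * Cx * sqrt (real n)" unfolding seteq sub by simp
        have "\<not> l * Cx * sqrt (real n) \<le> (\<Sum>j\<in>{j\<in>{1..n}. n - k \<le> n - j}. \<mu>x - x j \<omega>)"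
          using nBx2 \<omega> False unfolding Bx2_def by auto
        then have 2: "real k * \<mu>x - s \<omega> k < l * Cx * sqrt (real n)" unfolding seteq sub2 by simp
        show ?thesis using 1 2 by linarith
      qed
      define W where "W = real n * \<bar>\<mu>x\<bar> + l * Cx * sqrt (real n)"
      have W0: "W \<ge> 0" unfolding W_def using l0 Cx0 by simp
      have sq: "(s \<omega> k)\<^sup>2 \<le> W\<^sup>2" if k: "k \<in> {2..n}" for k
      proof -
        have "\<bar>s \<omega> k\<bar> \<le> \<bar>real k * \<mu>x\<bar> + l * Cx * sqrt (real n)"
          using dev[of k] k abs_triangle_ineq[of "s \<omega> k - real k * \<mu>x" "real k * \<mu>x"] by auto
        also have "\<bar>real k * \<mu>x\<bar> \<le> real n * \<bar>\<mu>x\<bar>" using k by (simp add: abs_mult mult_right_mono)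
        finally have "\<bar>s \<omega> k\<bar> \<le> \<bar>W\<bar>" using W0 unfolding W_def by simp
        then show ?thesis by (simp only: abs_le_square_iff)
      qed
      have "(\<Sum>k\<in>{2..n}. (s \<omega> k)\<^sup>2) \<le> real (card {2..n}) * W\<^sup>2"
        using sum_bounded_above[of "{2..n}" "\<lambda>k. (s \<omega> k)\<^sup>2" "W\<^sup>2"] sq by simp
      also have "\<dots> \<le> real n * W\<^sup>2" by (rule mult_right_mono) auto
      finally have ssq: "(\<Sum>k\<in>{2..n}. (s \<omega> k)\<^sup>2) \<le> real n * W\<^sup>2" .
      have sqrtb: "sqrt (\<Sum>k\<in>{2..n}. (s \<omega> k)\<^sup>2) \<le> real n powr (3/2) * \<bar>\<mu>x\<bar> + l * Cx * real n"
      proof -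
        have "sqrt (\<Sum>k\<in>{2..n}. (s \<omega> k)\<^sup>2) \<le> sqrt (real n * W\<^sup>2)" using ssq by simp
        also have "\<dots> = sqrt (real n) * W" using W0 by (simp add: real_sqrt_mult)
        also have "\<dots> = real n powr (3/2) * \<bar>\<mu>x\<bar> + l * Cx * real n"
        proof -
          have "real n powr (3/2) = real n powr (1 + 1/2)" by simp
          also have "\<dots> = real n powr 1 * real n powr (1/2)" by (rule powr_add)
          also have "\<dots> = real n * sqrt (real n)" using n2 by (simp add: powr_half_sqrt)
          finally have "real n powr (3/2) = real n * sqrt (real n)" .
          then show ?thesis unfolding W_def by (simp add: algebra_simps)
        qed
        finally show ?thesis .
      qed
      have az: "\<bar>\<Sum>k\<in>{2..n}. s \<omega> k * d k \<omega> * Q \<omega> k\<bar> \<le> l * u * G * sqrt (\<Sum>k\<in>{2..n}. (s \<omega> k)\<^sup>2)"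
      proof -
        have e1: "(\<Sum>k\<in>{2..n}. (\<Sum>i\<in>{1..k}. ?X \<omega> i)\<^sup>2) = (\<Sum>k\<in>{2..n}. (s \<omega> k)\<^sup>2)"
        proof (rule sum.cong[OF refl])
          fix k assume "k \<in> {2..n}"
          then have "(\<Sum>i\<in>{1..k}. ?X \<omega> i) = s \<omega> k" unfolding s_def by (intro sum.cong) auto
          then show "(\<Sum>i\<in>{1..k}. ?X \<omega> i)\<^sup>2 = (s \<omega> k)\<^sup>2" by simp
        qed
        have e2: "(\<Sum>k\<in>{2..n}. (\<Sum>i\<in>{1..k}. ?X \<omega> i) * ?D \<omega> k * gq n G k (?D \<omega>))
            = (\<Sum>k\<in>{2..n}. s \<omega> k * d k \<omega> * Q \<omega> k)"
        proof (rule sum.cong[OF refl])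
          fix k assume k: "k \<in> {2..n}"
          then have "(\<Sum>i\<in>{1..k}. ?X \<omega> i) = s \<omega> k" unfolding s_def by (intro sum.cong) auto
          then show "(\<Sum>i\<in>{1..k}. ?X \<omega> i) * ?D \<omega> k * gq n G k (?D \<omega>) = s \<omega> k * d k \<omega> * Q \<omega> k"
            using k gqQ[OF k] by simp
        qed
        have sp: "(?D \<omega>, ?X \<omega>) \<in> space ?P" by (rule measurable_space[OF PXm \<omega>])
        have "(?D \<omega>, ?X \<omega>) \<notin> Haz" using nBaz \<omega> unfolding Baz_def by auto
        then have "\<not> l * u * G * sqrt (\<Sum>k\<in>{2..n}. (\<Sum>i\<in>{1..k}. ?X \<omega> i)\<^sup>2)
            < \<bar>\<Sum>k\<in>{2..n}. (\<Sum>i\<in>{1..k}. ?X \<omega> i) * ?D \<omega> k * gq n G k (?D \<omega>)\<bar>"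
          using sp unfolding Haz_def by simp
        then show ?thesis unfolding e1 e2 by simp
      qed
      have "\<bar>rsum (\<lambda>i. x i \<omega>) (\<lambda>k. d k \<omega>) n - (\<Sum>i=1..n. x i \<omega>)\<bar>
          \<le> l * u * G * (real n powr (3/2) * \<bar>\<mu>x\<bar> + l * Cx * real n)"
        unfolding errid
        by (rule order_trans[OF az mult_left_mono[OF sqrtb]]) (use l0 u0 Gpos in simp)
      also have "\<dots> = RHS" unfolding RHS_def by (simp add: algebra_simps power2_eq_square)
      finally show "\<omega> \<in> Tg" unfolding Tg_def using \<omega> by simp
    qed
    have "measure M (Bd \<union> Bx1 \<union> Bx2 \<union> Baz) \<le> measure M Bd + measure M Bx1 + measure M Bx2 + measure M Baz"
    proof -
      have "measure M (Bd \<union> Bx1 \<union> Bx2 \<union> Baz) \<le> measure M (Bd \<union> Bx1 \<union> Bx2) + measure M Baz"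
        by (rule measure_Un_le) (use BdM Bx1M Bx2M BazM in auto)
      moreover have "measure M (Bd \<union> Bx1 \<union> Bx2) \<le> measure M (Bd \<union> Bx1) + measure M Bx2"
        by (rule measure_Un_le) (use BdM Bx1M Bx2M in auto)
      moreover have "measure M (Bd \<union> Bx1) \<le> measure M Bd + measure M Bx1"
        by (rule measure_Un_le) (use BdM Bx1M in auto)
      ultimately show ?thesis by linarith
    qed
    also have "\<dots> \<le> \<delta>" using Bdp Bx1p Bx2p Bazp del0 by linarith
    finally have bad: "measure M (Bd \<union> Bx1 \<union> Bx2 \<union> Baz) \<le> \<delta>" .
    have BM: "Bd \<union> Bx1 \<union> Bx2 \<union> Baz \<in> sets M" using BdM Bx1M Bx2M BazM by auto
    have "1 - \<delta> \<le> measure M (space M - (Bd \<union> Bx1 \<union> Bx2 \<union> Baz))"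
      using P.prob_compl[OF BM] bad by simp
    also have "\<dots> \<le> measure M Tg" by (rule P.finite_measure_mono[OF good TgM])
    finally show ?thesis .
  qed
  then show ?thesis unfolding Tg_def RHS_def G_def l_def .
qed



end
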